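(* Let $f_1,\dots,f_n\in\mathbb{Z}[x_1,\dots,x_n,y_1,\dots,y_n,z_1,\dots,z_r]$ and for $\overline{z}\in\mathbb{C}^r$ let $F_{\overline{z}}:\mathbb{C}^n\times\mathbb{C}^n\to\mathbb{C}^n$ be the map $(\overline{x},\overline{y})\mapsto(f_1,\dots,f_n)(\overline{x},\overline{y},\overline{z})$. The set of $\overline{z}\in\mathbb{C}^r$ such that $F_{\overline{z}}$ has a balanced zero is an open subset of $\mathbb{C}^r$. Likewise, the set of $\overline{z}\in\mathbb{C}^r$ such that $F_{\overline{z}}$ has a well balanced zero is an open subset of $\mathbb{C}^r$.
   Context: A zero $(\overline{a},\overline{b})$ of a polynomial map $G:\mathbb{C}^n\times\mathbb{C}^n\to\mathbb{C}^n$ is a balanced zero if (1) $a_1,\dots,a_n$ are nonzero and pairwise distinct, and (2) there is a partition $I\sqcup J=\{1,\dots,n\}$ such that the $n\times n$ Jacobian matrix of $G$ with respect to the variables $(x_i)_{i\in I}$ and $(y_j)_{j\in J}$ is nonsingular at $(\overline{a},\overline{b})$. It is a well balanced zero if moreover (3) the tangent space $(\overline{a},\overline{b})+\ker DG(\overline{a},\overline{b})$ is not contained in any hyperplane $\{x_i=c\}$ with $i\in\{1,\dots,n\}$, $c\in\mathbb{C}$. *)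

theory Defs
  imports "HOL-Analysis.Analysis"
begin

text \<open>The index sets
  {1..n} and {1..r} are the finite types 'n and 'r.\<close>

datatype ('n, 'r) ipoly =
    Const int
  | X 'n
  | Y 'n
  | Z 'r
  | Add "('n, 'r) ipoly" "('n, 'r) ipoly"
  | Mul "('n, 'r) ipoly" "('n, 'r) ipoly"

primrec peval :: "('n, 'r) ipoly \<Rightarrow> complex^'n \<Rightarrow> complex^'n \<Rightarrow> complex^'r \<Rightarrow> complex" where
  "peval (Const c) x y z = of_int c"
| "peval (X i) x y z = x $ i"
| "peval (Y i) x y z = y $ i"
| "peval (Z k) x y z = z $ k"
| "peval (Add p q) x y z = peval p x y z + peval q x y z"
| "peval (Mul p q) x y z = peval p x y z * peval q x y z"

definition Fmap :: "('n \<Rightarrow> ('n, 'r) ipoly) \<Rightarrow> complex^'r \<Rightarrow> complex^'n \<Rightarrow> complex^'n \<Rightarrow> complex^'n" where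
  "Fmap f z x y = (\<chi> k. peval (f k) x y z)"

definition dX :: "('n, 'r) ipoly \<Rightarrow> complex^'r \<Rightarrow> complex^'n \<Rightarrow> complex^'n \<Rightarrow> 'n \<Rightarrow> complex" where
  "dX p z x y j = deriv (\<lambda>t. peval p (\<chi> i. if i = j then t else x $ i) y z) (x $ j)"

definition dY :: "('n, 'r) ipoly \<Rightarrow> complex^'r \<Rightarrow> complex^'n \<Rightarrow> complex^'n \<Rightarrow> 'n \<Rightarrow> complex" where
  "dY p z x y j = deriv (\<lambda>t. peval p x (\<chi> i. if i = j then t else y $ i) z) (y $ j)"

text \<open>Jacobian of F_z w.r.t. the variables (x_i)_{i in I} and (y_j)_{j not in I}:
  column j is d/dx_j if j in I, else d/dy_j (J = complement of I).\<close>
definition jac_IJ :: "('n \<Rightarrow> ('n, 'r) ipoly) \<Rightarrow> complex^'r \<Rightarrow> 'n set \<Rightarrow> complex^'n \<Rightarrow> complex^'n \<Rightarrow> complex^'n^'n" where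
  "jac_IJ f z I a b = (\<chi> k j. if j \<in> I then dX (f k) z a b j else dY (f k) z a b j)"

definition DF :: "('n \<Rightarrow> ('n, 'r) ipoly) \<Rightarrow> complex^'r \<Rightarrow> complex^'n \<Rightarrow> complex^'n \<Rightarrow> (complex^'n) \<times> (complex^'n) \<Rightarrow> complex^'n" where
  "DF f z a b uv = (\<chi> k. (\<Sum>j\<in>UNIV. dX (f k) z a b j * fst uv $ j + dY (f k) z a b j * snd uv $ j))"

definition balanced_zero :: "('n \<Rightarrow> ('n, 'r) ipoly) \<Rightarrow> complex^'r \<Rightarrow> complex^'n \<Rightarrow> complex^'n \<Rightarrow> bool" where
  "balanced_zero f z a b \<longleftrightarrow>
     Fmap f z a b = 0 \<and>
     (\<forall>i. a $ i \<noteq> 0) \<and> (\<forall>i j. a $ i = a $ j \<longrightarrow> i = j) \<and>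
     (\<exists>I. invertible (jac_IJ f z I a b))"

definition well_balanced_zero :: "('n \<Rightarrow> ('n, 'r) ipoly) \<Rightarrow> complex^'r \<Rightarrow> complex^'n \<Rightarrow> complex^'n \<Rightarrow> bool" where
  "well_balanced_zero f z a b \<longleftrightarrow>
     balanced_zero f z a b \<and>
     (\<forall>i c. \<not> ((\<lambda>uv. (a, b) + uv) ` {uv. DF f z a b uv = 0} \<subseteq> {p. fst p $ i = c}))"

end

theory Submission
  imports Defs
begin

lemma ift_param:
  fixes H :: "'a::euclidean_space \<times> 'b::euclidean_space \<Rightarrow> 'b"
    and H' :: "'a \<times> 'b \<Rightarrow> 'a \<times> 'b \<Rightarrow> 'b"
  assumes der: "\<And>s. (H has_derivative H' s) (at s)"
    and cont: "\<And>v. continuous_on UNIV (\<lambda>s. H' s v)"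
    and z: "H (z0,w0) = 0"
    and inj: "\<And>h. H' (z0,w0) (0,h) = 0 \<Longrightarrow> h = 0"
  obtains Oz W where "open Oz" "z0 \<in> Oz" "continuous_on Oz W" "W z0 = w0"
    "\<And>z. z \<in> Oz \<Longrightarrow> H (z, W z) = 0"
proof -
  define \<Phi> where "\<Phi> s = (fst s, H s)" for s
  define \<Phi>' where "\<Phi>' s v = (fst v, H' s v)" for s v
  have derP: "(\<Phi> has_derivative \<Phi>' s) (at s)" for s
    unfolding \<Phi>_def[abs_def] \<Phi>'_def[abs_def]
    by (intro has_derivative_Pair has_derivative_fst has_derivative_ident der)
  have blP: "bounded_linear (\<Phi>' s)" for s
    using derP has_derivative_bounded_linear by blast
  define f' where "f' s = Blinfun (\<Phi>' s)" for s
  have f'a: "blinfun_apply (f' s) = \<Phi>' s" for s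
    unfolding f'_def using blP bounded_linear_Blinfun_apply by blast
  have contf: "continuous_on UNIV f'"
    by (rule continuous_on_blinfun_componentwise)
      (auto simp: f'a \<Phi>'_def intro!: continuous_intros cont)
  let ?x0 = "(z0,w0)"
  have "inj (\<Phi>' ?x0)"
  proof -
    have "linear (\<Phi>' ?x0)" using blP bounded_linear.linear by blast
    moreover have "\<Phi>' ?x0 v = 0 \<Longrightarrow> v = 0" for v
      using inj[of "snd v"] by (cases v) (auto simp: \<Phi>'_def zero_prod_def)
    ultimately show ?thesis by (simp add: linear_injective_0)
  qed
  then obtain g where g: "linear g" "g \<circ> \<Phi>' ?x0 = id"
    using linear_injective_left_inverse blP bounded_linear.linear by blast
  define invf where "invf = Blinfun g"
  have invfa: "blinfun_apply invf = g"
    unfolding invf_def using g(1) linear_conv_bounded_linear bounded_linear_Blinfun_apply by blast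
  have invf: "invf o\<^sub>L f' ?x0 = id_blinfun"
    by (rule blinfun_eqI) (metis blinfun_apply_blinfun_compose invfa f'a g(2) comp_apply id_apply
        blinfun_apply_id_blinfun)
  obtain U' V gg gg' where "open U'" "?x0 \<in> U'" "open V" "\<Phi> ?x0 \<in> V"
      and hom: "homeomorphism U' V \<Phi> gg"
  proof -
    obtain U' V gg gg' where "open U'" "U' \<subseteq> UNIV" "?x0 \<in> U'" "open V" "\<Phi> ?x0 \<in> V"
      "homeomorphism U' V \<Phi> gg"
    proof (rule inverse_function_theorem[of UNIV \<Phi> f' ?x0 invf])
      show "\<And>x. x \<in> UNIV \<Longrightarrow> (\<Phi> has_derivative blinfun_apply (f' x)) (at x)"
        using derP f'a by simp
    qed (use contf invf in auto)
    then show ?thesis using that by blast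
  qed
  define Oz where "Oz = (\<lambda>z. (z, 0::'b)) -` V"
  define W where "W z = snd (gg (z, 0))" for z
  have hom': "\<And>x. x \<in> U' \<Longrightarrow> gg (\<Phi> x) = x" "\<And>y. y \<in> V \<Longrightarrow> \<Phi> (gg y) = y"
    "continuous_on V gg"
    using hom unfolding homeomorphism_def by auto
  show ?thesis
  proof
    show "open Oz" unfolding Oz_def
      by (rule continuous_open_vimage[OF \<open>open V\<close>]) (intro continuous_intros)
    show "z0 \<in> Oz" using \<open>\<Phi> ?x0 \<in> V\<close> z by (simp add: Oz_def \<Phi>_def)
    show "continuous_on Oz W" unfolding W_def Oz_def
      by (intro continuous_intros continuous_on_compose2[OF hom'(3)]) auto
    show "W z0 = w0" unfolding W_def using hom'(1)[OF \<open>?x0 \<in> U'\<close>] z by (simp add: \<Phi>_def)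
    show "H (z, W z) = 0" if "z \<in> Oz" for z
    proof -
      have "\<Phi> (gg (z,0)) = (z,0)" using hom'(2) that by (simp add: Oz_def)
      then have "fst (gg (z,0)) = z" "H (gg (z,0)) = 0" by (auto simp: \<Phi>_def)
      then show ?thesis unfolding W_def by (metis prod.collapse)
    qed
  qed
qed

primrec dd :: "('n, 'r) ipoly \<Rightarrow> complex^'n \<Rightarrow> complex^'n \<Rightarrow> complex^'r \<Rightarrow>
    complex^'n \<Rightarrow> complex^'n \<Rightarrow> complex^'r \<Rightarrow> complex" where
  "dd (Const c) x y z u v t = 0"
| "dd (X i) x y z u v t = u $ i"
| "dd (Y i) x y z u v t = v $ i"
| "dd (Z k) x y z u v t = t $ k"
| "dd (Add p q) x y z u v t = dd p x y z u v t + dd q x y z u v t"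
| "dd (Mul p q) x y z u v t = dd p x y z u v t * peval q x y z + peval p x y z * dd q x y z u v t"

lemma has_derivative_vec_lambda:
  fixes f :: "'a::euclidean_space \<Rightarrow> 'i::finite \<Rightarrow> 'b::real_normed_vector"
  assumes "\<And>i. ((\<lambda>x. f x i) has_derivative (\<lambda>h. f' h i)) F"
  shows "((\<lambda>x. \<chi> i. f x i) has_derivative (\<lambda>h. \<chi> i. f' h i)) F"
proof -
  have bl: "bounded_linear (\<lambda>h. f' h i)" for i using assms has_derivative_bounded_linear by blast
  have "linear (\<lambda>h. \<chi> i. f' h i)"
  proof (rule linearI)
    show "(\<chi> i. f' (b1 + b2) i) = (\<chi> i. f' b1 i) + (\<chi> i. f' b2 i)" for b1 b2
      using linear_add[OF bounded_linear.linear[OF bl]] by (simp add: vec_eq_iff)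
    show "(\<chi> i. f' (r *\<^sub>R b) i) = r *\<^sub>R (\<chi> i. f' b i)" for r b
      using linear_scale[OF bounded_linear.linear[OF bl]] by (simp add: vec_eq_iff)
  qed
  then have "bounded_linear (\<lambda>h. \<chi> i. f' h i)" using linear_conv_bounded_linear by blast
  moreover have "((\<lambda>y. ((\<chi> i. f y i) - (\<chi> i. f (Lim F (\<lambda>x. x)) i) - (\<chi> i. f' (y - Lim F (\<lambda>x. x)) i)) /\<^sub>R
      norm (y - Lim F (\<lambda>x. x))) \<longlongrightarrow> 0) F" (is "(?h \<longlongrightarrow> _) F")
  proof -
    let ?g = "\<lambda>y. \<chi> i. (f y i - f (Lim F (\<lambda>x. x)) i - f' (y - Lim F (\<lambda>x. x)) i) /\<^sub>R
      norm (y - Lim F (\<lambda>x. x))"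
    have T: "(?g \<longlongrightarrow> (\<chi> i. 0)) F"
      using assms unfolding has_derivative_def by (intro tendsto_vec_lambda) auto
    have E0: "(\<chi> i. 0) = (0 :: 'b^'i)" by (simp add: vec_eq_iff)
    have E: "?g = ?h"
      by (rule ext, rule vec_eq_iff[THEN iffD2]) simp
    show ?thesis using T unfolding E E0 .
  qed
  ultimately show ?thesis unfolding has_derivative_def by blast
qed

lemma peval_has_derivative:
  assumes xd: "(xf has_derivative xf') (at s0 within S)"
    and yd: "(yf has_derivative yf') (at s0 within S)"
    and zd: "(zf has_derivative zf') (at s0 within S)"
  shows "((\<lambda>s. peval p (xf s) (yf s) (zf s)) has_derivative
     (\<lambda>h. dd p (xf s0) (yf s0) (zf s0) (xf' h) (yf' h) (zf' h))) (at s0 within S)"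
proof (induction p)
  case (Const c) then show ?case by simp
next
  case (X i) then show ?case using bounded_linear.has_derivative[OF bounded_linear_vec_nth xd] by simp
next
  case (Y i) then show ?case using bounded_linear.has_derivative[OF bounded_linear_vec_nth yd] by simp
next
  case (Z i) then show ?case using bounded_linear.has_derivative[OF bounded_linear_vec_nth zd] by simp
next
  case (Add p q) then show ?case by (simp add: has_derivative_add)
next
  case (Mul p q) then show ?case
    by (auto intro!: has_derivative_eq_rhs[OF has_derivative_mult[OF Mul.IH]] simp: algebra_simps)
qed

lemma peval_continuous:
  assumes "continuous_on S xf" "continuous_on S yf" "continuous_on S zf"
  shows "continuous_on S (\<lambda>s. peval p (xf s) (yf s) (zf s))"
  by (induction p) (auto intro!: continuous_intros assms)

lemma dd_continuous:
  assumes "continuous_on S xf" "continuous_on S yf" "continuous_on S zf"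
    "continuous_on S uf" "continuous_on S vf" "continuous_on S tf"
  shows "continuous_on S (\<lambda>s. dd p (xf s) (yf s) (zf s) (uf s) (vf s) (tf s))"
  by (induction p) (auto intro!: continuous_intros assms peval_continuous)

lemma sum_axis_nth: "(\<Sum>j\<in>UNIV. (u::complex^'n)$j * (axis j 1 :: complex^'n) $ i) = u $ i"
proof -
  have "\<And>j. u$j * (axis j 1 :: complex^'n) $ i = (if j = i then u$i else 0)" by (simp add: axis_def)
  then show ?thesis by simp
qed

lemma sum_if_delta_mult: "(\<Sum>ja\<in>UNIV. (if ja = (j::'n::finite) then h else 0) * (c ja :: complex)) = h * c j"
proof -
  have e: "(\<lambda>ja. (if ja = j then h else 0) * c ja) = (\<lambda>ja. if ja = j then h * c j else 0)" by auto
  show ?thesis unfolding e by simp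
qed

lemma dd_expand:
  "dd p x y z u v t = (\<Sum>j\<in>UNIV. u$j * dd p x y z (axis j 1) 0 0) + (\<Sum>j\<in>UNIV. v$j * dd p x y z 0 (axis j 1) 0)
     + (\<Sum>k\<in>UNIV. t$k * dd p x y z 0 0 (axis k 1))"
proof (induction p)
  case (Mul p q)
  show ?case by (simp add: Mul.IH algebra_simps sum_distrib_left sum_distrib_right sum.distrib)
qed (simp_all add: sum_axis_nth sum.distrib algebra_simps)

lemma dX_dd: "dX p z x y j = dd p x y z (axis j 1) 0 0"
proof -
  have "((\<lambda>t. peval p (\<chi> i. if i = j then t else x $ i) y z) has_derivative
      (\<lambda>h. dd p (\<chi> i. if i = j then x$j else x $ i) y z (\<chi> i. if i = j then h else 0) 0 0)) (at (x$j))"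
  proof (rule peval_has_derivative[where yf' = "\<lambda>_. 0" and zf' = "\<lambda>_. 0"])
    show "((\<lambda>t. \<chi> i. if i = j then t else x $ i) has_derivative (\<lambda>h. \<chi> i. if i = j then h else 0)) (at (x$j))"
      by (rule has_derivative_vec_lambda) (case_tac "i = j"; auto)
  qed (rule has_derivative_const)+
  moreover have "(\<chi> i. if i = j then x$j else x $ i) = x" by (simp add: vec_eq_iff)
  moreover have "dd p x y z (\<chi> i. if i = j then h else 0) 0 0 = h * dd p x y z (axis j 1) 0 0" for h
    by (subst dd_expand) (simp add: sum_if_delta_mult)
  ultimately have "((\<lambda>t. peval p (\<chi> i. if i = j then t else x $ i) y z) has_field_derivative
      dd p x y z (axis j 1) 0 0) (at (x$j))"
    unfolding has_field_derivative_def by (simp add: mult.commute[of _ "dd _ _ _ _ _ _ _"])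
  then show ?thesis unfolding dX_def by (rule DERIV_imp_deriv)
qed

lemma dY_dd: "dY p z x y j = dd p x y z 0 (axis j 1) 0"
proof -
  have "((\<lambda>t. peval p x (\<chi> i. if i = j then t else y $ i) z) has_derivative
      (\<lambda>h. dd p x (\<chi> i. if i = j then y$j else y $ i) z 0 (\<chi> i. if i = j then h else 0) 0)) (at (y$j))"
  proof (rule peval_has_derivative[where xf' = "\<lambda>_. 0" and zf' = "\<lambda>_. 0"])
    show "((\<lambda>t. \<chi> i. if i = j then t else y $ i) has_derivative (\<lambda>h. \<chi> i. if i = j then h else 0)) (at (y$j))"
      by (rule has_derivative_vec_lambda) (case_tac "i = j"; auto)
  qed (rule has_derivative_const)+
  moreover have "(\<chi> i. if i = j then y$j else y $ i) = y" by (simp add: vec_eq_iff)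
  moreover have "dd p x y z 0 (\<chi> i. if i = j then h else 0) 0 = h * dd p x y z 0 (axis j 1) 0" for h
    by (subst dd_expand) (simp add: sum_if_delta_mult)
  ultimately have "((\<lambda>t. peval p x (\<chi> i. if i = j then t else y $ i) z) has_field_derivative
      dd p x y z 0 (axis j 1) 0) (at (y$j))"
    unfolding has_field_derivative_def by (simp add: mult.commute[of _ "dd _ _ _ _ _ _ _"])
  then show ?thesis unfolding dY_def by (rule DERIV_imp_deriv)
qed

lemma DF_dd: "DF f z a b uv = (\<chi> k. dd (f k) a b z (fst uv) (snd uv) 0)"
  unfolding DF_def dX_dd dY_dd
  by (subst (2) dd_expand) (simp add: vec_eq_iff sum.distrib mult.commute)

lemma mat_axis: "((A::complex^'n^'m) *v axis j 1) $ r = A $ r $ j"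
proof -
  have "\<And>c. A $ r $ c * (axis j 1 :: complex^'n) $ c = (if c = j then A $ r $ j else 0)"
    by (simp add: axis_def)
  then show ?thesis by (simp add: matrix_vector_mult_def)
qed

lemma mvneg: "(M::complex^'n^'m) *v (- x) = - (M *v x)"
  by (simp add: vec_eq_iff matrix_vector_mult_def sum_negf)

lemma ker_coord:
  fixes M C :: "complex^'n^'n"
  assumes "invertible M"
  shows "(\<exists>h h'. M *v h + C *v h' = 0 \<and> h$i \<noteq> 0) \<longleftrightarrow>
         (\<exists>j. det (\<chi> r c. if c = i then C$r$j else M$r$c) \<noteq> 0)"
proof -
  obtain B where B: "M ** B = mat 1" "B ** M = mat 1" using assms unfolding invertible_def by blast
  have dM: "det M \<noteq> 0" using assms invertible_det_nz by blast
  define P where "P = B ** C"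
  have MP: "M ** P = C" unfolding P_def by (simp add: matrix_mul_assoc B)
  have R: "det (\<chi> r c. if c = i then C$r$j else M$r$c) = P$i$j * det M" for j
  proof -
    have "M *v (P *v axis j 1) = C *v axis j 1" by (simp add: matrix_vector_mul_assoc MP)
    then have "(\<chi> r c. if c = i then C$r$j else M$r$c) = (\<chi> r c. if c = i then (M *v (P *v axis j 1))$r else M$r$c)"
      by (simp only: mat_axis)
    then show ?thesis using cramer_lemma[of i M "P *v axis j 1"] by (simp add: mat_axis)
  qed
  show ?thesis
  proof
    assume "\<exists>h h'. M *v h + C *v h' = 0 \<and> h$i \<noteq> 0"
    then obtain h h' where hh: "M *v h + C *v h' = 0" "h$i \<noteq> 0" by blast
    have "B *v (M *v h + C *v h') = 0" using hh(1) by simp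
    then have "h + P *v h' = 0"
      by (simp add: matrix_vector_right_distrib matrix_vector_mul_assoc B P_def)
    then have "h $ i = - (P *v h') $ i" by (metis add.commute add_eq_0_iff vector_uminus_component)
    then have "(\<Sum>j\<in>UNIV. P$i$j * h'$j) \<noteq> 0" using hh(2) by (simp add: matrix_vector_mult_def)
    then obtain j where "P$i$j \<noteq> 0" by (metis (mono_tags, lifting) mult_eq_0_iff sum.neutral)
    then show "\<exists>j. det (\<chi> r c. if c = i then C$r$j else M$r$c) \<noteq> 0" using R dM by auto
  next
    assume "\<exists>j. det (\<chi> r c. if c = i then C$r$j else M$r$c) \<noteq> 0"
    then obtain j where "P$i$j \<noteq> 0" using R by auto
    moreover have "M *v (- (P *v axis j 1)) + C *v axis j 1 = 0"
      by (simp add: matrix_vector_mul_assoc MP mvneg)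
    ultimately show "\<exists>h h'. M *v h + C *v h' = 0 \<and> h$i \<noteq> 0"
      by (metis mat_axis neg_equal_0_iff_equal vector_uminus_component)
  qed
qed

definition xo :: "'n set \<Rightarrow> complex^'n \<Rightarrow> complex^'n \<Rightarrow> complex^'n::finite" where
  "xo I a0 w = (\<chi> i. if i \<in> I then w$i else a0$i)"
definition yo :: "'n set \<Rightarrow> complex^'n \<Rightarrow> complex^'n \<Rightarrow> complex^'n::finite" where
  "yo I b0 w = (\<chi> i. if i \<in> I then b0$i else w$i)"
definition uvof :: "('n::finite) set \<Rightarrow> complex^'n \<Rightarrow> complex^'n \<Rightarrow> (complex^'n) \<times> (complex^'n)" where
  "uvof I h h' = ((\<chi> j. if j \<in> I then h$j else h'$j), (\<chi> j. if j \<in> I then h'$j else h$j))"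

lemma DF_uvof: "DF f z a b (uvof I h h') = jac_IJ f z I a b *v h + jac_IJ f z (-I) a b *v h'"
  by (auto simp: vec_eq_iff DF_def jac_IJ_def uvof_def matrix_vector_mult_def sum.distrib[symmetric]
      intro!: sum.cong)

lemma uvof_surj: "uv = uvof I (\<chi> j. if j \<in> I then fst uv$j else snd uv$j) (\<chi> j. if j \<in> I then snd uv$j else fst uv$j)"
  by (cases uv) (simp add: uvof_def vec_eq_iff)

lemma xo_der:
  fixes g :: "'a::euclidean_space \<Rightarrow> complex^'n::finite"
  assumes "(g has_derivative g') F"
  shows "((\<lambda>s. xo I a0 (g s)) has_derivative (\<lambda>v. xo I 0 (g' v))) F"
  unfolding xo_def
proof (rule has_derivative_vec_lambda)
  fix i
  show "((\<lambda>s. if i \<in> I then g s $ i else a0 $ i) has_derivative (\<lambda>v. if i \<in> I then g' v $ i else 0 $ i)) F"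
    using bounded_linear.has_derivative[OF bounded_linear_vec_nth assms] by (cases "i \<in> I") auto
qed

lemma yo_der:
  fixes g :: "'a::euclidean_space \<Rightarrow> complex^'n::finite"
  assumes "(g has_derivative g') F"
  shows "((\<lambda>s. yo I b0 (g s)) has_derivative (\<lambda>v. yo I 0 (g' v))) F"
  unfolding yo_def
proof (rule has_derivative_vec_lambda)
  fix i
  show "((\<lambda>s. if i \<in> I then b0 $ i else g s $ i) has_derivative (\<lambda>v. if i \<in> I then 0 $ i else g' v $ i)) F"
    using bounded_linear.has_derivative[OF bounded_linear_vec_nth assms] by (cases "i \<in> I") auto
qed

lemma xo_cont: "continuous_on S g \<Longrightarrow> continuous_on S (\<lambda>s. xo I a0 (g s))"
  unfolding xo_def by (rule continuous_on_vec_lambda) (case_tac "i \<in> I"; auto intro!: continuous_intros)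

lemma yo_cont: "continuous_on S g \<Longrightarrow> continuous_on S (\<lambda>s. yo I a0 (g s))"
  unfolding yo_def by (rule continuous_on_vec_lambda) (case_tac "i \<in> I"; auto intro!: continuous_intros)

lemma local_zero:
  fixes f :: "'n::finite \<Rightarrow> ('n, 'r::finite) ipoly"
  assumes F0: "Fmap f z0 a0 b0 = 0" and inv: "invertible (jac_IJ f z0 I a0 b0)"
  obtains Oz a b where "open Oz" "z0 \<in> Oz" "continuous_on Oz a" "continuous_on Oz b"
    "a z0 = a0" "b z0 = b0" "\<And>z. z \<in> Oz \<Longrightarrow> Fmap f z (a z) (b z) = 0"
proof -
  define w0 where "w0 = (\<chi> i. if i \<in> I then a0$i else b0$i)"
  define H where "H s = Fmap f (fst s) (xo I a0 (snd s)) (yo I b0 (snd s))" for s :: "(complex^'r) \<times> (complex^'n)"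
  define H' where "H' s v = (\<chi> k. dd (f k) (xo I a0 (snd s)) (yo I b0 (snd s)) (fst s)
      (xo I 0 (snd v)) (yo I 0 (snd v)) (fst v))" for s v :: "(complex^'r) \<times> (complex^'n)"
  have der: "(H has_derivative H' s) (at s)" for s
    unfolding H_def H'_def Fmap_def
    by (intro has_derivative_vec_lambda peval_has_derivative xo_der yo_der has_derivative_snd
        has_derivative_fst has_derivative_ident)
  have cont: "continuous_on UNIV (\<lambda>s. H' s v)" for v
    unfolding H'_def
    by (intro continuous_on_vec_lambda dd_continuous xo_cont yo_cont continuous_intros)
  have xw0: "xo I a0 w0 = a0" and yw0: "yo I b0 w0 = b0"
    by (auto simp: xo_def yo_def w0_def vec_eq_iff)
  have H0: "H (z0, w0) = 0" using F0 by (simp add: H_def xw0 yw0)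
  have injH: "h = 0" if "H' (z0, w0) (0, h) = 0" for h
  proof -
    have "uvof I h 0 = (xo I 0 h, yo I 0 h)" by (simp add: uvof_def xo_def yo_def vec_eq_iff)
    then have "H' (z0, w0) (0, h) = DF f z0 a0 b0 (uvof I h 0)"
      by (simp add: H'_def DF_dd xw0 yw0)
    then have "jac_IJ f z0 I a0 b0 *v h = 0" using that by (simp add: DF_uvof)
    moreover obtain B where "B ** jac_IJ f z0 I a0 b0 = mat 1" using inv unfolding invertible_def by blast
    ultimately show "h = 0" by (metis matrix_vector_mul_assoc matrix_vector_mul_lid matrix_vector_mult_0_right)
  qed
  obtain Oz W where "open Oz" "z0 \<in> Oz" "continuous_on Oz W" "W z0 = w0" "\<And>z. z \<in> Oz \<Longrightarrow> H (z, W z) = 0"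
    using ift_param[of H H' z0 w0, OF der cont H0 injH] by blast
  then show ?thesis
    by (intro that[of Oz "\<lambda>z. xo I a0 (W z)" "\<lambda>z. yo I b0 (W z)"])
      (auto simp: xw0 yw0 H_def intro: xo_cont yo_cont)
qed

lemma open_nz: "continuous_on S g \<Longrightarrow> open S \<Longrightarrow> open {z\<in>S. g z \<noteq> (0::complex)}"
proof -
  assume a: "continuous_on S g" "open S"
  have "{z\<in>S. g z \<noteq> 0} = S \<inter> g -` (-{0})" by auto
  then show ?thesis using continuous_open_preimage[OF a, of "-{0}"] by auto
qed

lemma det_cont:
  assumes "\<And>i j. continuous_on S (\<lambda>z. A z $ i $ j)"
  shows "continuous_on S (\<lambda>z. det (A z :: complex^'n^'n))"
  unfolding det_def by (intro continuous_on_sum continuous_on_mult continuous_on_const continuous_on_prod assms)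

lemma jac_cont:
  "continuous_on S a \<Longrightarrow> continuous_on S b \<Longrightarrow> continuous_on S (\<lambda>z. jac_IJ f z I (a z) (b z) $ k $ j)"
  unfolding jac_IJ_def dX_dd dY_dd by (cases "j \<in> I") (auto intro!: dd_continuous continuous_intros)

lemma DF_zero: "DF f z a b 0 = 0"
  by (simp add: DF_def vec_eq_iff)

lemma hyp_char:
  "(\<forall>i c. \<not> ((\<lambda>uv. (a, b) + uv) ` {uv. DF f z a b uv = 0} \<subseteq> {p. fst p $ i = c}))
   \<longleftrightarrow> (\<forall>i. \<exists>uv. DF f z a b uv = 0 \<and> fst uv $ i \<noteq> 0)"
proof
  assume h: "\<forall>i c. \<not> ((\<lambda>uv. (a, b) + uv) ` {uv. DF f z a b uv = 0} \<subseteq> {p. fst p $ i = c})"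
  show "\<forall>i. \<exists>uv. DF f z a b uv = 0 \<and> fst uv $ i \<noteq> 0"
  proof
    fix i
    from h have "\<not> ((\<lambda>uv. (a, b) + uv) ` {uv. DF f z a b uv = 0} \<subseteq> {p. fst p $ i = a $ i})" by blast
    then obtain p where "p \<in> (\<lambda>uv. (a, b) + uv) ` {uv. DF f z a b uv = 0}" "fst p $ i \<noteq> a $ i"
      by blast
    then obtain uv where "DF f z a b uv = 0" "fst ((a, b) + uv) $ i \<noteq> a $ i"
      by blast
    then show "\<exists>uv. DF f z a b uv = 0 \<and> fst uv $ i \<noteq> 0" by (intro exI[of _ uv]) (auto simp: fst_add)
  qed
next
  assume h: "\<forall>i. \<exists>uv. DF f z a b uv = 0 \<and> fst uv $ i \<noteq> 0"
  show "\<forall>i c. \<not> ((\<lambda>uv. (a, b) + uv) ` {uv. DF f z a b uv = 0} \<subseteq> {p. fst p $ i = c})"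
  proof (intro allI notI)
    fix i c
    assume s: "(\<lambda>uv. (a, b) + uv) ` {uv. DF f z a b uv = 0} \<subseteq> {p. fst p $ i = c}"
    from h obtain uv where uv: "DF f z a b uv = 0" "fst uv $ i \<noteq> 0" by blast
    have "(a, b) + 0 \<in> {p. fst p $ i = c}" using s DF_zero by blast
    moreover have "(a, b) + uv \<in> {p. fst p $ i = c}" using s uv(1) by blast
    ultimately show False using uv(2) by (auto simp: fst_add)
  qed
qed

lemma wb_char:
  fixes f :: "'n::finite \<Rightarrow> ('n, 'r::finite) ipoly"
  assumes inv: "invertible (jac_IJ f z I a b)"
  shows "(\<forall>i. \<exists>uv. DF f z a b uv = 0 \<and> fst uv $ i \<noteq> 0) \<longleftrightarrow>
    (\<forall>i\<in>I. \<exists>j. det (\<chi> r c. if c = i then jac_IJ f z (-I) a b $r$j else jac_IJ f z I a b $r$c) \<noteq> 0)"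
proof -
  define M where "M = jac_IJ f z I a b"
  define C where "C = jac_IJ f z (-I) a b"
  have key: "(\<exists>uv. DF f z a b uv = 0 \<and> fst uv $ i \<noteq> 0) \<longleftrightarrow>
      (\<exists>h h'. M *v h + C *v h' = 0 \<and> (if i \<in> I then h$i else h'$i) \<noteq> 0)" for i
  proof
    assume "\<exists>uv. DF f z a b uv = 0 \<and> fst uv $ i \<noteq> 0"
    then obtain uv where uv: "DF f z a b uv = 0" "fst uv $ i \<noteq> 0" by blast
    define h where "h = (\<chi> j. if j \<in> I then fst uv$j else snd uv$j)"
    define h' where "h' = (\<chi> j. if j \<in> I then snd uv$j else fst uv$j)"
    have "uv = uvof I h h'" unfolding h_def h'_def by (rule uvof_surj)
    then have "DF f z a b (uvof I h h') = 0" "fst (uvof I h h') $ i \<noteq> 0" using uv by simp_all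
    then show "\<exists>h h'. M *v h + C *v h' = 0 \<and> (if i \<in> I then h$i else h'$i) \<noteq> 0"
      unfolding DF_uvof M_def C_def by (intro exI[of _ h] exI[of _ h']) (auto simp: uvof_def)
  next
    assume "\<exists>h h'. M *v h + C *v h' = 0 \<and> (if i \<in> I then h$i else h'$i) \<noteq> 0"
    then obtain h h' where "M *v h + C *v h' = 0" "(if i \<in> I then h$i else h'$i) \<noteq> 0" by blast
    then show "\<exists>uv. DF f z a b uv = 0 \<and> fst uv $ i \<noteq> 0"
      by (intro exI[of _ "uvof I h h'"]) (simp add: DF_uvof M_def C_def, simp add: uvof_def)
  qed
  have notI: "\<exists>h h'. M *v h + C *v h' = 0 \<and> h'$i \<noteq> 0" for i
  proof -
    obtain B where B: "M ** B = mat 1" using inv unfolding invertible_def M_def by blast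
    have "M *v (- (B *v (C *v axis i 1))) + C *v axis i 1 = 0"
      by (simp add: mvneg matrix_vector_mul_assoc matrix_mul_assoc B)
    then show ?thesis by (intro exI[of _ "- (B *v (C *v axis i 1))"] exI[of _ "axis i 1"]) (simp add: axis_def)
  qed
  have eq: "(\<exists>uv. DF f z a b uv = 0 \<and> fst uv $ i \<noteq> 0) \<longleftrightarrow>
    (i \<in> I \<longrightarrow> (\<exists>j. det (\<chi> r c. if c = i then C $r$j else M $r$c) \<noteq> 0))" for i
  proof (cases "i \<in> I")
    case True
    then show ?thesis using key[of i] ker_coord[of M C i] inv by (simp add: M_def)
  next
    case False
    then show ?thesis using key[of i] notI[of i] by simp
  qed
  show ?thesis using eq unfolding M_def C_def by blast
qed

lemma balanced_nbhd:
  fixes f :: "'n::finite \<Rightarrow> ('n, 'r::finite) ipoly"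
  assumes bz: "balanced_zero f z0 a0 b0" and inv: "invertible (jac_IJ f z0 I a0 b0)"
  obtains Oz a b T where "open Oz" "continuous_on Oz a" "continuous_on Oz b" "a z0 = a0" "b z0 = b0"
    "open T" "z0 \<in> T" "T \<subseteq> Oz"
    "\<And>z. z \<in> T \<Longrightarrow> balanced_zero f z (a z) (b z) \<and> invertible (jac_IJ f z I (a z) (b z))"
proof -
  have F0: "Fmap f z0 a0 b0 = 0" and nz: "\<forall>i. a0 $ i \<noteq> 0" and dist: "\<forall>i j. a0 $ i = a0 $ j \<longrightarrow> i = j"
    using bz unfolding balanced_zero_def by blast+
  obtain Oz a b where Oz: "open Oz" "z0 \<in> Oz" "continuous_on Oz a" "continuous_on Oz b"
    "a z0 = a0" "b z0 = b0" "\<And>z. z \<in> Oz \<Longrightarrow> Fmap f z (a z) (b z) = 0"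
    using local_zero[OF F0 inv] by blast
  define g where "g z = (\<Prod>i\<in>UNIV. a z $ i) * (\<Prod>i\<in>UNIV. \<Prod>j\<in>UNIV-{i}. a z $ i - a z $ j)
      * det (jac_IJ f z I (a z) (b z))" for z
  have c1: "continuous_on Oz (\<lambda>z. a z $ i)" for i by (rule continuous_on_component[OF Oz(3)])
  have gc: "continuous_on Oz g"
    unfolding g_def
  proof (intro continuous_on_mult)
    show "continuous_on Oz (\<lambda>z. \<Prod>i\<in>UNIV. a z $ i)" by (rule continuous_on_prod) (rule c1)
    show "continuous_on Oz (\<lambda>z. \<Prod>i\<in>UNIV. \<Prod>j\<in>UNIV-{i}. a z $ i - a z $ j)"
      by (intro continuous_on_prod continuous_on_diff c1)
    show "continuous_on Oz (\<lambda>z. det (jac_IJ f z I (a z) (b z)))"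
      by (intro det_cont jac_cont Oz(3,4))
  qed
  have gnz: "g z \<noteq> 0 \<longleftrightarrow> (\<forall>i. a z $ i \<noteq> 0) \<and> (\<forall>i j. a z $ i = a z $ j \<longrightarrow> i = j)
      \<and> det (jac_IJ f z I (a z) (b z)) \<noteq> 0" for z
  proof -
    have p1: "(\<Prod>i\<in>UNIV. a z $ i) \<noteq> 0 \<longleftrightarrow> (\<forall>i. a z $ i \<noteq> 0)"
      by (simp add: prod_zero_iff)
    have p2: "(\<Prod>i\<in>UNIV. \<Prod>j\<in>UNIV-{i}. a z $ i - a z $ j) \<noteq> 0 \<longleftrightarrow>
        (\<forall>i j. a z $ i = a z $ j \<longrightarrow> i = j)"
      by (simp add: prod_zero_iff) blast
    show ?thesis unfolding g_def using p1 p2 by (simp only: mult_eq_0_iff de_Morgan_disj conj_assoc)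
  qed
  define T where "T = {z\<in>Oz. g z \<noteq> 0}"
  show ?thesis
  proof (rule that[OF Oz(1,3,4,5,6)])
    show "open T" unfolding T_def by (rule open_nz[OF gc Oz(1)])
    show "z0 \<in> T" unfolding T_def using Oz(2,5,6) nz dist inv gnz[of z0]
      by (simp add: invertible_det_nz)
    show "T \<subseteq> Oz" unfolding T_def by blast
    show "balanced_zero f z (a z) (b z) \<and> invertible (jac_IJ f z I (a z) (b z))" if "z \<in> T" for z
      using that Oz(7) gnz[of z] unfolding T_def balanced_zero_def by (auto simp: invertible_det_nz)
  qed
qed

theorem proposition1:
  fixes f :: "'n::finite \<Rightarrow> ('n, 'r::finite) ipoly"
  shows "open {z :: complex^'r. \<exists>a b. balanced_zero f z a b}
       \<and> open {z :: complex^'r. \<exists>a b. well_balanced_zero f z a b}"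
proof
  show "open {z :: complex^'r. \<exists>a b. balanced_zero f z a b}"
  proof (subst open_subopen, intro ballI)
    fix z0 assume "z0 \<in> {z :: complex^'r. \<exists>a b. balanced_zero f z a b}"
    then obtain a0 b0 where bz: "balanced_zero f z0 a0 b0" by blast
    then obtain I where inv: "invertible (jac_IJ f z0 I a0 b0)" unfolding balanced_zero_def by blast
    obtain Oz a b T where "open Oz" "continuous_on Oz a" "continuous_on Oz b" "a z0 = a0" "b z0 = b0"
      "open T" "z0 \<in> T" "T \<subseteq> Oz"
      "\<And>z. z \<in> T \<Longrightarrow> balanced_zero f z (a z) (b z) \<and> invertible (jac_IJ f z I (a z) (b z))"
      by (rule balanced_nbhd[OF bz inv]) blast
    then show "\<exists>T. open T \<and> z0 \<in> T \<and> T \<subseteq> {z :: complex^'r. \<exists>a b. balanced_zero f z a b}"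
      by blast
  qed
next
  show "open {z :: complex^'r. \<exists>a b. well_balanced_zero f z a b}"
  proof (subst open_subopen, intro ballI)
    fix z0 assume "z0 \<in> {z :: complex^'r. \<exists>a b. well_balanced_zero f z a b}"
    then obtain a0 b0 where wz: "well_balanced_zero f z0 a0 b0" by blast
    then have bz: "balanced_zero f z0 a0 b0" unfolding well_balanced_zero_def by blast
    then obtain I where inv: "invertible (jac_IJ f z0 I a0 b0)" unfolding balanced_zero_def by blast
    obtain Oz a b T where Oz: "open Oz" "continuous_on Oz a" "continuous_on Oz b" "a z0 = a0" "b z0 = b0"
      "open T" "z0 \<in> T" "T \<subseteq> Oz"
      and Tz: "\<And>z. z \<in> T \<Longrightarrow> balanced_zero f z (a z) (b z) \<and> invertible (jac_IJ f z I (a z) (b z))"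
      by (rule balanced_nbhd[OF bz inv]) blast
    define R where "R i j z = det (\<chi> r c. if c = i then jac_IJ f z (-I) (a z) (b z) $r$j
        else jac_IJ f z I (a z) (b z) $r$c)" for i j z
    have Rc: "continuous_on Oz (R i j)" for i j
      unfolding R_def
    proof (rule det_cont)
      fix r c
      show "continuous_on Oz (\<lambda>z. (\<chi> r c. if c = i then jac_IJ f z (-I) (a z) (b z) $r$j
        else jac_IJ f z I (a z) (b z) $r$c) $ r $ c)"
        by (cases "c = i") (simp_all add: jac_cont Oz(2,3))
    qed
    define T2 where "T2 = T \<inter> (\<Inter>i\<in>I. \<Union>j. {z\<in>Oz. R i j z \<noteq> 0})"
    have "open T2" unfolding T2_def
      by (intro open_Int Oz(6) open_INT open_UN ballI open_nz[OF Rc Oz(1)]) simp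
    moreover have "z0 \<in> T2"
    proof -
      have "\<forall>i. \<exists>uv. DF f z0 a0 b0 uv = 0 \<and> fst uv $ i \<noteq> 0"
        using wz hyp_char[where a=a0 and b=b0 and f=f and z=z0] unfolding well_balanced_zero_def by blast
      then have "\<forall>i\<in>I. \<exists>j. R i j z0 \<noteq> 0" unfolding R_def Oz(4) Oz(5) using wb_char[OF inv] by simp
      then show ?thesis unfolding T2_def using Oz(7,8) by blast
    qed
    moreover have "T2 \<subseteq> {z :: complex^'r. \<exists>a b. well_balanced_zero f z a b}"
    proof
      fix z assume z: "z \<in> T2"
      then have zT: "z \<in> T" unfolding T2_def by blast
      have "\<forall>i\<in>I. \<exists>j. R i j z \<noteq> 0" using z unfolding T2_def by blast
      then have "\<forall>i. \<exists>uv. DF f z (a z) (b z) uv = 0 \<and> fst uv $ i \<noteq> 0"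
        using wb_char[of f z I "a z" "b z"] Tz[OF zT] by (simp add: R_def)
      then have "well_balanced_zero f z (a z) (b z)"
        using Tz[OF zT] hyp_char[where a="a z" and b="b z" and f=f and z=z] unfolding well_balanced_zero_def by blast
      then show "z \<in> {z :: complex^'r. \<exists>a b. well_balanced_zero f z a b}" by blast
    qed
    ultimately show "\<exists>T. open T \<and> z0 \<in> T \<and> T \<subseteq> {z :: complex^'r. \<exists>a b. well_balanced_zero f z a b}"
      by blast
  qed
qed

end
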